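(* Let $\mathcal{K}\subseteq\mathbb{R}^n$ be a proper convex cone with a $\nu$-LHSCB $f$ with gradient $g$, let $\mathbf{w}\in(\mathcal{K}^* )^\circ$, and let $\mathbf{x}_0\in\mathcal{K}^\circ$ with $\mathbf{w}^\top\mathbf{x}_0=1$. Let $\mathbf{e}=-\frac{g(\mathbf{x}_0)}{\nu}$ and consider the pair of problems \[\min\{\nu\mathbf{w}^\top\mathbf{x}:\ \mathbf{e}^\top\mathbf{x}=1,\ \mathbf{x}\in\mathcal{K}\},\qquad \max\{y:\ y\mathbf{e}+\mathbf{s}=\nu\mathbf{w},\ \mathbf{s}\in\mathcal{K}^*,\ y\in\mathbb{R}\}.\] Then strong duality holds between these problems with attained optimal solutions, the optimal value is positive, and there are strictly feasible solutions $(\mathbf{x},y,\mathbf{s})$ (i.e. $\mathbf{x}\in\mathcal{K}^\circ$, $\mathbf{e}^\top\mathbf{x}=1$, $\mathbf{s}\in(\mathcal{K}^* )^\circ$, $y\mathbf{e}+\mathbf{s}=\nu\mathbf{w}$) with $y=0$.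
   Context: $\mathcal{K}\subseteq\mathbb{R}^n$ is a proper (closed, convex, pointed, full-dimensional) cone with interior $\mathcal{K}^\circ$ and dual cone $\mathcal{K}^*=\{\mathbf{s}:\mathbf{s}^\top\mathbf{x}\ge0\ \forall\mathbf{x}\in\mathcal{K}\}$. A $\nu$-LHSCB for $\mathcal{K}$ is a strictly convex, three times differentiable $f:\mathcal{K}^\circ\to\mathbb{R}$ with $f(\mathbf{x})\to\infty$ at the boundary of $\mathcal{K}$, $|D^3f(\mathbf{x})[\mathbf{h},\mathbf{h},\mathbf{h}]|\le 2\,(D^2f(\mathbf{x})[\mathbf{h},\mathbf{h}])^{3/2}$, $\nu=\sup_{\mathbf{x}\in\mathcal{K}^\circ}g(\mathbf{x})^\top H(\mathbf{x})^{-1}g(\mathbf{x})<\infty$ ($H$ the Hessian), and $f(t\mathbf{x})=f(\mathbf{x})-\nu\ln t$ for $t>0$. *)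

theory Defs
  imports "HOL-Analysis.Analysis"
begin

definition proper_cone :: "'a::euclidean_space set \<Rightarrow> bool" where
  "proper_cone K \<longleftrightarrow> cone K \<and> convex K \<and> closed K \<and>
     (\<forall>x. x \<in> K \<and> - x \<in> K \<longrightarrow> x = 0) \<and> interior K \<noteq> {}"

definition dual_cone :: "'a::euclidean_space set \<Rightarrow> 'a set" where
  "dual_cone K = {s. \<forall>x\<in>K. s \<bullet> x \<ge> 0}"

definition strictly_convex_on :: "'a::real_vector set \<Rightarrow> ('a \<Rightarrow> real) \<Rightarrow> bool" where
  "strictly_convex_on S f \<longleftrightarrow> convex S \<and>
     (\<forall>x\<in>S. \<forall>y\<in>S. \<forall>t. x \<noteq> y \<and> 0 < t \<and> t < 1 \<longrightarrow>
        f ((1 - t) *\<^sub>R x + t *\<^sub>R y) < (1 - t) * f x + t * f y)"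

text \<open>\<open>LHSCB K f g \<nu>\<close>: \<open>f\<close> is a \<open>\<nu>\<close>-logarithmically homogeneous self-concordant
  barrier for \<open>K\<close> with gradient \<open>g\<close>. \<open>H x\<close> is the Hessian (as a linear map) and
  \<open>T x k h\<close> the third derivative, i.e. \<open>D\<^sup>3f(x)[k,h,\<cdot>]\<close>.\<close>
definition LHSCB :: "'a::euclidean_space set \<Rightarrow> ('a \<Rightarrow> real) \<Rightarrow> ('a \<Rightarrow> 'a) \<Rightarrow> real \<Rightarrow> bool" where
  "LHSCB K f g \<nu> \<longleftrightarrow>
     (\<exists>H T.
        (\<forall>x\<in>interior K. (f has_derivative (\<lambda>h. g x \<bullet> h)) (at x)) \<and>
        (\<forall>x\<in>interior K. (g has_derivative H x) (at x)) \<and>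
        (\<forall>x\<in>interior K. \<forall>h. ((\<lambda>y. H y h) has_derivative (\<lambda>k. T x k h)) (at x)) \<and>
        strictly_convex_on (interior K) f \<and>
        (\<forall>x0\<in>frontier K. filterlim f at_top (at x0 within interior K)) \<and>
        (\<forall>x\<in>interior K. \<forall>h. \<bar>T x h h \<bullet> h\<bar> \<le> 2 * (H x h \<bullet> h) powr (3/2)) \<and>
        (\<forall>x\<in>interior K. bij (H x)) \<and>
        bdd_above ((\<lambda>x. g x \<bullet> inv (H x) (g x)) ` interior K) \<and>
        \<nu> = (SUP x\<in>interior K. g x \<bullet> inv (H x) (g x)) \<and>
        (\<forall>x\<in>interior K. \<forall>t>0. f (t *\<^sub>R x) = f x - \<nu> * ln t))"

end

theory Submission imports Defs begin

lemma interior_scale: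
  fixes S :: "'a::euclidean_space set"
  assumes S: "\<And>x c. x \<in> S \<Longrightarrow> c \<ge> 0 \<Longrightarrow> c *\<^sub>R x \<in> S" and c: "c > 0"
    and x: "x \<in> interior S"
  shows "c *\<^sub>R x \<in> interior S"
proof -
  have "open ((\<lambda>y. c *\<^sub>R y) ` interior S)" using c by (intro open_scaling) auto
  moreover have "(\<lambda>y. c *\<^sub>R y) ` interior S \<subseteq> S"
    using S c interior_subset by fastforce
  ultimately have "(\<lambda>y. c *\<^sub>R y) ` interior S \<subseteq> interior S"
    by (rule interior_maximal[rotated])
  thus ?thesis using x by auto
qed

lemma zero_frontier:
  fixes K :: "'a::euclidean_space set"
  assumes "proper_cone K"
  shows "0 \<in> frontier K"
proof -
  from assms have cK: "cone K" and cl: "closed K" and pt: "\<And>x. x \<in> K \<Longrightarrow> - x \<in> K \<Longrightarrow> x = 0"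
    and ne: "interior K \<noteq> {}" unfolding proper_cone_def by auto
  obtain z where "z \<in> K" using ne interior_subset by blast
  hence "0 *\<^sub>R z \<in> K" using cK unfolding cone_def by blast
  hence z0: "0 \<in> K" by simp
  have "0 \<notin> interior K"
  proof
    assume "0 \<in> interior K"
    then obtain r where r: "r > 0" "ball 0 r \<subseteq> K" using mem_interior by blast
    obtain b :: 'a where b: "b \<in> Basis" using nonempty_Basis by blast
    define v where "v = (r/2) *\<^sub>R b"
    have nv: "norm v = r/2" using b r unfolding v_def by simp
    have "v \<in> K" "- v \<in> K" using r nv by (auto simp: subset_iff)
    hence "v = 0" using pt by blast
    thus False using nv r by simp
  qed
  thus ?thesis using z0 cl frontier_def closure_closed by auto
qed

lemma lhscb_facts:
  fixes K :: "'a::euclidean_space set"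
  assumes pc: "proper_cone K" and L: "LHSCB K f g \<nu>" and x0: "x0 \<in> interior K"
  shows "\<nu> > 0" "g x0 \<bullet> x0 = - \<nu>"
proof -
  from L obtain H T where
    fd: "\<forall>x\<in>interior K. (f has_derivative (\<lambda>h. g x \<bullet> h)) (at x)" and
    bar: "\<forall>x0\<in>frontier K. filterlim f at_top (at x0 within interior K)" and
    hom: "\<forall>x\<in>interior K. \<forall>t>0. f (t *\<^sub>R x) = f x - \<nu> * ln t"
    unfolding LHSCB_def by blast
  have cK: "cone K" using pc unfolding proper_cone_def by auto
  have intsc: "t *\<^sub>R x0 \<in> interior K" if "t > 0" for t
    using interior_scale[of K t x0] cK that x0 unfolding cone_def by blast
  have "filterlim (\<lambda>t. t *\<^sub>R x0) (at 0 within interior K) (at_right 0)"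
  proof (subst filterlim_at, intro conjI)
    have "x0 \<noteq> 0" using x0 zero_frontier[OF pc] frontier_def by auto
    then show "\<forall>\<^sub>F t in at_right 0. t *\<^sub>R x0 \<in> interior K \<and> t *\<^sub>R x0 \<noteq> 0"
      using intsc eventually_at_right_less[of 0] by (auto elim!: eventually_mono)
    have "((\<lambda>t. t *\<^sub>R x0) \<longlongrightarrow> 0 *\<^sub>R x0) (at_right 0)"
      by (intro tendsto_intros)
    then show "((\<lambda>t. t *\<^sub>R x0) \<longlongrightarrow> 0) (at_right 0)" by simp
  qed
  from filterlim_compose[OF bar[rule_format, OF zero_frontier[OF pc]] this]
  have "filterlim (\<lambda>t. f (t *\<^sub>R x0)) at_top (at_right 0)" .
  hence "\<forall>\<^sub>F t in at_right 0. f (t *\<^sub>R x0) > f x0"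
    by (simp add: filterlim_at_top_dense)
  moreover have "\<forall>\<^sub>F t in at_right (0::real). t < 1 \<and> t > 0"
    unfolding eventually_at_right_field by (intro exI[of _ 1]) auto
  ultimately have ev: "\<forall>\<^sub>F t in at_right (0::real). f (t *\<^sub>R x0) > f x0 \<and> t < 1 \<and> t > 0"
    by (rule eventually_conj)
  from this obtain t :: real where t: "f (t *\<^sub>R x0) > f x0" "t < 1" "t > 0"
    using eventually_happens[OF ev] by auto
  hence "\<nu> * ln t < 0" using hom x0 by auto
  moreover have "ln t < 0" using t by simp
  ultimately show "\<nu> > 0" by (simp add: mult_less_0_iff)
  have d1: "((\<lambda>t. f (t *\<^sub>R x0)) has_field_derivative (g x0 \<bullet> x0)) (at 1)"
  proof -
    have a: "((\<lambda>t::real. t *\<^sub>R x0) has_derivative (\<lambda>s. s *\<^sub>R x0)) (at 1)"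
      by (intro derivative_eq_intros) auto
    have b: "(f has_derivative (\<lambda>h. g x0 \<bullet> h)) (at ((\<lambda>t::real. t *\<^sub>R x0) 1))"
      using fd x0 by simp
    from has_derivative_compose[OF a b]
    show ?thesis unfolding has_field_derivative_def
      by (simp add: mult.commute[of _ "g x0 \<bullet> x0"])
  qed
  have d2: "((\<lambda>t. f x0 - \<nu> * ln t) has_field_derivative (- \<nu>)) (at 1)"
    by (auto intro!: derivative_eq_intros)
  have d3: "((\<lambda>t. f (t *\<^sub>R x0)) has_field_derivative (- \<nu>)) (at 1)"
    by (rule has_field_derivative_transform_within_open[OF d2, of "{0<..}"]) (use hom x0 in auto)
  show "g x0 \<bullet> x0 = - \<nu>" using DERIV_unique[OF d1 d3] .
qed

theorem lemma3p2:
  fixes K :: "'a::euclidean_space set" and f :: "'a \<Rightarrow> real" and g :: "'a \<Rightarrow> 'a"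
    and \<nu> :: real and w x0 :: 'a
  assumes "proper_cone K"
    and "LHSCB K f g \<nu>"
    and "w \<in> interior (dual_cone K)"
    and "x0 \<in> interior K" and "w \<bullet> x0 = 1"
  shows "let e = - (1 / \<nu>) *\<^sub>R g x0 in
    (\<exists>xs ys ss.
       xs \<in> K \<and> e \<bullet> xs = 1 \<and>
       ss \<in> dual_cone K \<and> ys *\<^sub>R e + ss = \<nu> *\<^sub>R w \<and>
       (\<forall>x. x \<in> K \<and> e \<bullet> x = 1 \<longrightarrow> \<nu> * (w \<bullet> xs) \<le> \<nu> * (w \<bullet> x)) \<and>
       (\<forall>y s. s \<in> dual_cone K \<and> y *\<^sub>R e + s = \<nu> *\<^sub>R w \<longrightarrow> y \<le> ys) \<and>
       \<nu> * (w \<bullet> xs) = ys \<and> ys > 0) \<and>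
    (\<exists>x s. x \<in> interior K \<and> e \<bullet> x = 1 \<and>
       s \<in> interior (dual_cone K) \<and> 0 *\<^sub>R e + s = \<nu> *\<^sub>R w)"
proof -
  note pc = assms(1) and L = assms(2) and wi = assms(3) and x0 = assms(4) and wx0 = assms(5)
  have nu: "\<nu> > 0" and eul: "g x0 \<bullet> x0 = - \<nu>" using lhscb_facts[OF pc L x0] by auto
  define e where "e = - (1 / \<nu>) *\<^sub>R g x0"
  have ex0: "e \<bullet> x0 = 1" using eul nu unfolding e_def by simp
  have cK: "cone K" and clK: "closed K" using pc unfolding proper_cone_def by auto
  have x0K: "x0 \<in> K" using x0 interior_subset by blast
  have wD: "w \<in> dual_cone K" using wi interior_subset by blast
  have wpos: "w \<bullet> x \<ge> 0" if "x \<in> K" for x using wD that unfolding dual_cone_def by auto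
  obtain r where r: "r > 0" "ball w r \<subseteq> dual_cone K" using wi mem_interior by blast
  define c where "c = r / 2"
  have c: "c > 0" using r unfolding c_def by simp
  have coer: "w \<bullet> x \<ge> c * norm x" if xK: "x \<in> K" for x
  proof (cases "x = 0")
    case False
    define u where "u = w - (c / norm x) *\<^sub>R x"
    have "dist w u = c" using False c unfolding u_def dist_norm by simp
    hence "u \<in> dual_cone K" using r c unfolding c_def by (auto simp: subset_iff)
    hence "u \<bullet> x \<ge> 0" using xK unfolding dual_cone_def by auto
    moreover have "u \<bullet> x = w \<bullet> x - c * norm x"
    proof -
      have "u \<bullet> x = w \<bullet> x - (c / norm x) * (x \<bullet> x)" unfolding u_def by (simp add: inner_diff_left)
      also have "x \<bullet> x = norm x * norm x" by (simp add: norm_eq_sqrt_inner)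
      also have "(c / norm x) * (norm x * norm x) = c * norm x" using False by simp
      finally show ?thesis .
    qed
    ultimately show ?thesis by simp
  qed simp
  define S where "S = {x \<in> K. e \<bullet> x = 1 \<and> w \<bullet> x \<le> w \<bullet> x0}"
  have "S = K \<inter> ({x. e \<bullet> x = 1} \<inter> {x. w \<bullet> x \<le> w \<bullet> x0})" unfolding S_def by auto
  hence "closed S" using clK by (simp add: closed_Int closed_hyperplane closed_halfspace_le)
  moreover have "bounded S"
  proof -
    have "norm x \<le> (w \<bullet> x0) / c" if "x \<in> S" for x
      using coer[of x] that c unfolding S_def by (auto simp: field_simps)
    thus ?thesis unfolding bounded_iff by blast
  qed
  ultimately have "compact S" using compact_eq_bounded_closed by blast
  moreover have "S \<noteq> {}" using x0K ex0 unfolding S_def by auto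
  moreover have "continuous_on S (\<lambda>x. w \<bullet> x)" by (intro continuous_intros)
  ultimately obtain xs where xsS: "xs \<in> S" and xsmin: "\<And>y. y \<in> S \<Longrightarrow> w \<bullet> xs \<le> w \<bullet> y"
    using continuous_attains_inf[of S "\<lambda>x. w \<bullet> x"] by blast
  have xsK: "xs \<in> K" and exs: "e \<bullet> xs = 1" and xsle: "w \<bullet> xs \<le> w \<bullet> x0" using xsS unfolding S_def by auto
  have opt: "w \<bullet> xs \<le> w \<bullet> x" if "x \<in> K" "e \<bullet> x = 1" for x
  proof (cases "w \<bullet> x \<le> w \<bullet> x0")
    case True thus ?thesis using xsmin that unfolding S_def by auto
  qed (use xsle in auto)
  define ys where "ys = \<nu> * (w \<bullet> xs)"
  define ss where "ss = \<nu> *\<^sub>R w - ys *\<^sub>R e"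
  have xs0: "xs \<noteq> 0" using exs by auto
  have ysp: "ys > 0"
  proof -
    have "w \<bullet> xs \<ge> c * norm xs" using coer xsK by blast
    moreover have "c * norm xs > 0" using c xs0 by simp
    ultimately show ?thesis unfolding ys_def using nu by simp
  qed
  have ssD: "ss \<in> dual_cone K"
    unfolding dual_cone_def
  proof (intro CollectI ballI)
    fix x assume xK: "x \<in> K"
    have "ys * (e \<bullet> x) \<le> \<nu> * (w \<bullet> x)"
    proof (cases "e \<bullet> x > 0")
      case True
      define x' where "x' = (1 / (e \<bullet> x)) *\<^sub>R x"
      have "x' \<in> K" using cK xK True unfolding cone_def x'_def by simp
      moreover have "e \<bullet> x' = 1" using True unfolding x'_def by simp
      ultimately have "w \<bullet> xs \<le> w \<bullet> x'" by (rule opt)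
      hence "w \<bullet> xs \<le> (w \<bullet> x) / (e \<bullet> x)" unfolding x'_def by simp
      hence "(w \<bullet> xs) * (e \<bullet> x) \<le> w \<bullet> x" using True by (simp add: field_simps)
      thus ?thesis unfolding ys_def using nu
        using mult_left_mono[OF \<open>(w \<bullet> xs) * (e \<bullet> x) \<le> w \<bullet> x\<close>, of \<nu>] by (simp add: mult.assoc)
    next
      case False
      hence "ys * (e \<bullet> x) \<le> 0" using ysp by (simp add: mult_nonneg_nonpos)
      moreover have "\<nu> * (w \<bullet> x) \<ge> 0" using nu wpos[OF xK] by simp
      ultimately show ?thesis by linarith
    qed
    thus "0 \<le> ss \<bullet> x" unfolding ss_def by (simp add: inner_diff_left)
  qed
  have dualopt: "y \<le> ys" if "s \<in> dual_cone K" "y *\<^sub>R e + s = \<nu> *\<^sub>R w" for y s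
  proof -
    have "s \<bullet> xs \<ge> 0" using that(1) xsK unfolding dual_cone_def by auto
    have "(y *\<^sub>R e + s) \<bullet> xs = y + s \<bullet> xs" using exs by (simp add: inner_add_left)
    also have "(y *\<^sub>R e + s) \<bullet> xs = ys" using that(2) unfolding ys_def by simp
    finally show ?thesis using \<open>s \<bullet> xs \<ge> 0\<close> by linarith
  qed
  have part1: "\<exists>xs ys ss.
       xs \<in> K \<and> e \<bullet> xs = 1 \<and>
       ss \<in> dual_cone K \<and> ys *\<^sub>R e + ss = \<nu> *\<^sub>R w \<and>
       (\<forall>x. x \<in> K \<and> e \<bullet> x = 1 \<longrightarrow> \<nu> * (w \<bullet> xs) \<le> \<nu> * (w \<bullet> x)) \<and>
       (\<forall>y s. s \<in> dual_cone K \<and> y *\<^sub>R e + s = \<nu> *\<^sub>R w \<longrightarrow> y \<le> ys) \<and>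
       \<nu> * (w \<bullet> xs) = ys \<and> ys > 0"
    apply (rule exI[of _ xs], rule exI[of _ ys], rule exI[of _ ss])
    using xsK exs ssD dualopt ysp opt nu unfolding ss_def ys_def
    by (intro conjI allI impI) (auto intro: mult_left_mono)
  have dcone: "\<And>x c. x \<in> dual_cone K \<Longrightarrow> c \<ge> 0 \<Longrightarrow> c *\<^sub>R x \<in> dual_cone K"
    unfolding dual_cone_def by simp
  have "\<nu> *\<^sub>R w \<in> interior (dual_cone K)" using interior_scale[OF dcone nu wi] by blast
  hence part2: "\<exists>x s. x \<in> interior K \<and> e \<bullet> x = 1 \<and>
       s \<in> interior (dual_cone K) \<and> 0 *\<^sub>R e + s = \<nu> *\<^sub>R w"
    using x0 ex0 by auto
  show ?thesis using part1 part2 unfolding e_def Let_def by blast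
qed

end
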